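(* Consider 3-Majority or 2-Choices and fix an opinion $i$. Define $$P=\exp(-\Omega(n\alpha_0(i)^2))\ \text{for 3-Majority},\qquad P=\exp(-\Omega(n\alpha_0(i)))\ \text{for 2-Choices}.$$ (i) For any constant $\varepsilon\in(0,1)$, let $C_1=\frac{(1-\varepsilon)c^\uparrow_\alpha}{(1+c^\uparrow_\alpha)^2}$. Then $\Pr[\tau^\uparrow_i\le C_1/\alpha_0(i)]\le P$. (ii) For any constant $\varepsilon\in(0,1)$, let $C_2=\frac{(1-c^{\mathrm{weak}})(1-\varepsilon)c^\downarrow_\alpha}{c^{\mathrm{weak}}(1+c^\uparrow_\alpha)^2}$. Then $\Pr[\tau^\downarrow_i\le\min\{\tau^{\mathrm{weak}}_i,\tau^\uparrow_i,C_2/\alpha_0(i)\}]\le P$.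
   Context: **Setting.** Let $V$ be a set of $n$ vertices and $k\in\{1,\dots,n\}$. A configuration is a map $\mathsf{opn}\colon V\to[k]$. The process is synchronous: each round $t\ge1$ produces $\mathsf{opn}_t$ from $\mathsf{opn}_{t-1}$, and all vertices make their choices independently. **3-Majority.** Each vertex $v$ samples $w_1,w_2,w_3\in V$ independently and uniformly, with replacement. It sets $\mathsf{opn}_t(v)=\mathsf{opn}_{t-1}(w_1)$ if $\mathsf{opn}_{t-1}(w_1)=\mathsf{opn}_{t-1}(w_2)$, and $\mathsf{opn}_t(v)=\mathsf{opn}_{t-1}(w_3)$ otherwise. **2-Choices.** Each vertex $v$ samples $w_1,w_2\in V$ independently and uniformly, with replacement. It sets $\mathsf{opn}_t(v)=\mathsf{opn}_{t-1}(w_1)$ if $\mathsf{opn}_{t-1}(w_1)=\mathsf{opn}_{t-1}(w_2)$, and $\mathsf{opn}_t(v)=\mathsf{opn}_{t-1}(v)$ otherwise. **Basic quantities.** - $\alpha_t(i)=|\{v:\mathsf{opn}_t(v)=i\}|/n$. - $\gamma_t=\sum_i\alpha_t(i)^2$. **Stopping times.** Fix constants $c^\uparrow_\alpha,c^\downarrow_\alpha>0$ and $c^{\mathrm{weak}}\in(0,1/2)$. - $\tau^\uparrow_i=\inf\{t\ge0:\alpha_t(i)\ge(1+c^\uparrow_\alpha)\alpha_0(i)\}$. - $\tau^\downarrow_i=\inf\{t\ge0:\alpha_t(i)\le(1-c^\downarrow_\alpha)\alpha_0(i)\}$. - $\tau^{\mathrm{weak}}_i=\inf\{t\ge0:\alpha_t(i)\le(1-c^{\mathrm{weak}})\gamma_t\}$.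 **Conventions.** $\Omega(\cdot)$ hides positive constants depending only on $\varepsilon$ and the fixed constants above, not on $n$, $k$ or the configuration. *)

theory Defs
  imports "HOL-Probability.Probability"
begin

text \<open>Vertices are V = {0..<n}; opinions are [k] = {1..k}. A configuration is a
  function nat => nat; only its values on {0..<n} matter (outside V the process
  sets the value 0).\<close>

type_synonym config = "nat \<Rightarrow> nat"

datatype protocol = ThreeMajority | TwoChoices

definition unif :: "nat \<Rightarrow> nat pmf" where
  "unif n = pmf_of_set {..<n}"

definition vertex_update :: "protocol \<Rightarrow> nat \<Rightarrow> config \<Rightarrow> nat \<Rightarrow> nat pmf" where
  "vertex_update p n opn v =
     (case p of
        ThreeMajority \<Rightarrow>
          bind_pmf (unif n) (\<lambda>w1. bind_pmf (unif n) (\<lambda>w2. bind_pmf (unif n) (\<lambda>w3.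
            return_pmf (if opn w1 = opn w2 then opn w1 else opn w3))))
      | TwoChoices \<Rightarrow>
          bind_pmf (unif n) (\<lambda>w1. bind_pmf (unif n) (\<lambda>w2.
            return_pmf (if opn w1 = opn w2 then opn w1 else opn v))))"

definition step :: "protocol \<Rightarrow> nat \<Rightarrow> config \<Rightarrow> config pmf" where
  "step p n opn = Pi_pmf {..<n} 0 (vertex_update p n opn)"

fun run :: "protocol \<Rightarrow> nat \<Rightarrow> config \<Rightarrow> nat \<Rightarrow> config list pmf" where
  "run p n opn0 0 = return_pmf [opn0]"
| "run p n opn0 (Suc T) =
     bind_pmf (run p n opn0 T) (\<lambda>xs. map_pmf (\<lambda>y. xs @ [y]) (step p n (last xs)))"

definition alpha :: "nat \<Rightarrow> config \<Rightarrow> nat \<Rightarrow> real" where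
  "alpha n opn i = real (card {v \<in> {..<n}. opn v = i}) / real n"

definition gamma :: "nat \<Rightarrow> nat \<Rightarrow> config \<Rightarrow> real" where
  "gamma n k opn = (\<Sum>j\<in>{1..k}. (alpha n opn j)^2)"

definition hit :: "(config \<Rightarrow> bool) \<Rightarrow> config list \<Rightarrow> enat" where
  "hit P xs = (if \<exists>t<length xs. P (xs ! t)
               then enat (LEAST t. t < length xs \<and> P (xs ! t)) else \<infinity>)"

end

theory Submission
  imports Defs
begin


lemma run_length: "xs \<in> set_pmf (run p n x N) \<Longrightarrow> length xs = Suc N"
  by (induction N arbitrary: xs) auto

lemma run_front:
  "run p n x (Suc N) = bind_pmf (step p n x) (\<lambda>y. map_pmf ((#) x) (run p n y N))"
proof (induction N)
  case 0
  then show ?case by (simp add: bind_return_pmf map_pmf_def)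
next
  case (Suc N)
  have "run p n x (Suc (Suc N)) =
     bind_pmf (run p n x (Suc N)) (\<lambda>xs. map_pmf (\<lambda>y. xs @ [y]) (step p n (last xs)))" by simp
  also have "\<dots> = bind_pmf (step p n x) (\<lambda>y. bind_pmf (run p n y N)
       (\<lambda>ys. map_pmf (\<lambda>z. (x # ys) @ [z]) (step p n (last (x # ys)))))"
    unfolding Suc.IH by (simp only: bind_assoc_pmf bind_map_pmf)
  also have "\<dots> = bind_pmf (step p n x) (\<lambda>y. bind_pmf (run p n y N)
       (\<lambda>ys. map_pmf ((#) x) (map_pmf (\<lambda>z. ys @ [z]) (step p n (last ys)))))"
  proof (intro bind_pmf_cong refl)
    fix y ys assume "ys \<in> set_pmf (run p n y N)"
    then have "ys \<noteq> []" using run_length by fastforce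
    then show "map_pmf (\<lambda>z. (x # ys) @ [z]) (step p n (last (x # ys))) =
          map_pmf ((#) x) (map_pmf (\<lambda>z. ys @ [z]) (step p n (last ys)))"
      by (simp add: pmf.map_comp o_def)
  qed
  also have "\<dots> = bind_pmf (step p n x) (\<lambda>y. map_pmf ((#) x) (run p n y (Suc N)))"
    by (simp add: map_bind_pmf)
  finally show ?case .
qed

definition ev :: "(config \<Rightarrow> bool) \<Rightarrow> (config \<Rightarrow> bool) \<Rightarrow> config list set" where
  "ev G A = {xs. \<exists>t<length xs. A (xs!t) \<and> (\<forall>s<t. G (xs!s) \<and> \<not> A (xs!s))}"

lemma ev_Cons: "(x # ys \<in> ev G A) \<longleftrightarrow> A x \<or> (G x \<and> \<not> A x \<and> ys \<in> ev G A)"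
proof
  assume "x # ys \<in> ev G A"
  then obtain t where t: "t < Suc (length ys)" "A ((x#ys)!t)" "\<forall>s<t. G ((x#ys)!s) \<and> \<not> A ((x#ys)!s)"
    by (auto simp: ev_def)
  show "A x \<or> (G x \<and> \<not> A x \<and> ys \<in> ev G A)"
  proof (cases t)
    case 0 then show ?thesis using t by simp
  next
    case (Suc t')
    have "G x \<and> \<not> A x" using t(3) Suc by (metis nth_Cons_0 zero_less_Suc)
    moreover have "ys \<in> ev G A" unfolding ev_def
      using t Suc by (auto intro!: exI[of _ t'])
    ultimately show ?thesis by blast
  qed
next
  assume "A x \<or> (G x \<and> \<not> A x \<and> ys \<in> ev G A)"
  then show "x # ys \<in> ev G A"
  proof
    assume "A x" then show ?thesis by (auto simp: ev_def intro!: exI[of _ 0])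
  next
    assume h: "G x \<and> \<not> A x \<and> ys \<in> ev G A"
    then obtain t where t: "t < length ys" "A (ys!t)" "\<forall>s<t. G (ys!s) \<and> \<not> A (ys!s)"
      by (auto simp: ev_def)
    show ?thesis unfolding ev_def using h t
      by (intro CollectI exI[of _ "Suc t"]) (auto simp: less_Suc_eq_0_disj)
  qed
qed

lemma generic:
  fixes F :: "nat \<Rightarrow> config \<Rightarrow> real" and m :: real
  assumes Fnn: "\<And>t x. F t x \<ge> 0"
    and inv_step: "\<And>x y. Inv x \<Longrightarrow> y \<in> set_pmf (step p n x) \<Longrightarrow> Inv y"
    and super: "\<And>t x. Inv x \<Longrightarrow> G x \<Longrightarrow> \<not> A x \<Longrightarrow> t < T \<Longrightarrow>
        (\<integral>\<^sup>+y. ennreal (F (Suc t) y) \<partial>step p n x) \<le> ennreal (F t x)"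
    and target: "\<And>t x. Inv x \<Longrightarrow> A x \<Longrightarrow> t \<le> T \<Longrightarrow> m \<le> F t x"
    and mpos: "m > 0"
  shows "Inv x \<Longrightarrow> j + N \<le> T \<Longrightarrow>
     ennreal m * emeasure (run p n x N) (ev G A) \<le> ennreal (F j x)"
proof (induction N arbitrary: x j)
  case 0
  show ?case
  proof (cases "A x")
    case True
    have "ennreal m * emeasure (run p n x 0) (ev G A) \<le> ennreal m * 1"
      by (intro mult_left_mono) (auto simp: indicator_def)
    also have "\<dots> \<le> ennreal (F j x)" using target[OF 0(1) True, of j] 0(2) by (simp add: ennreal_leI)
    finally show ?thesis .
  next
    case False
    then have "[x] \<notin> ev G A" by (simp add: ev_Cons ev_def)
    then show ?thesis by simp
  qed
next
  case (Suc N)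
  show ?case
  proof (cases "A x")
    case True
    have "ennreal m * emeasure (run p n x (Suc N)) (ev G A) \<le> ennreal m * 1"
      by (intro mult_left_mono) (simp_all only: measure_pmf.emeasure_le_1 zero_le)
    also have "\<dots> \<le> ennreal (F j x)" using target[OF Suc(2) True, of j] Suc(3) by (simp add: ennreal_leI)
    finally show ?thesis .
  next
    case False
    have em: "emeasure (run p n x (Suc N)) (ev G A) =
        (\<integral>\<^sup>+y. emeasure (run p n y N) ((#) x -` ev G A) \<partial>step p n x)"
      by (simp only: run_front emeasure_bind_pmf emeasure_map_pmf)
    show ?thesis
    proof (cases "G x")
      case False2: False
      then have "(#) x -` ev G A = {}" using False by (auto simp: ev_Cons)
      then show ?thesis using em by simp
    next
      case True
      then have pre: "(#) x -` ev G A = ev G A" using False by (auto simp: ev_Cons)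
      have "ennreal m * emeasure (run p n x (Suc N)) (ev G A) =
          (\<integral>\<^sup>+y. ennreal m * emeasure (run p n y N) (ev G A) \<partial>step p n x)"
        using em pre by (simp add: nn_integral_cmult)
      also have "\<dots> \<le> (\<integral>\<^sup>+y. ennreal (F (Suc j) y) \<partial>step p n x)"
        using Suc.IH[of _ "Suc j"] inv_step[OF Suc(2)] Suc(3)
        by (intro nn_integral_mono_AE AE_pmfI) auto
      also have "\<dots> \<le> ennreal (F j x)"
        using super[OF Suc(2) True False] Suc(3) by simp
      finally show ?thesis .
    qed
  qed
qed

lemma generic_prob:
  fixes F :: "nat \<Rightarrow> config \<Rightarrow> real" and m :: real
  assumes Fnn: "\<And>t x. F t x \<ge> 0"
    and inv_step: "\<And>x y. Inv x \<Longrightarrow> y \<in> set_pmf (step p n x) \<Longrightarrow> Inv y"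
    and super: "\<And>t x. Inv x \<Longrightarrow> G x \<Longrightarrow> \<not> A x \<Longrightarrow> t < T \<Longrightarrow>
        (\<integral>\<^sup>+y. ennreal (F (Suc t) y) \<partial>step p n x) \<le> ennreal (F t x)"
    and target: "\<And>t x. Inv x \<Longrightarrow> A x \<Longrightarrow> t \<le> T \<Longrightarrow> m \<le> F t x"
    and mpos: "m > 0" and "Inv x"
  shows "measure_pmf.prob (run p n x T) (ev G A) \<le> F 0 x / m"
proof -
  have "ennreal m * emeasure (run p n x T) (ev G A) \<le> ennreal (F 0 x)"
    using generic[of F Inv p n G A T m x 0 T] assms by auto
  then have "ennreal (m * measure_pmf.prob (run p n x T) (ev G A)) \<le> ennreal (F 0 x)"
    using mpos by (simp add: measure_pmf.emeasure_eq_measure ennreal_mult)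
  then have "m * measure_pmf.prob (run p n x T) (ev G A) \<le> F 0 x"
    using Fnn by (simp add: ennreal_le_iff)
  then show ?thesis using mpos by (simp add: field_simps)
qed



definition cnt :: "nat \<Rightarrow> config \<Rightarrow> nat \<Rightarrow> nat" where
  "cnt n x i = card {v\<in>{..<n}. x v = i}"

definition S2 :: "nat \<Rightarrow> config \<Rightarrow> real" where
  "S2 n x = (\<Sum>w<n. real (cnt n x (x w)))"

lemma alpha_cnt: "alpha n x i = real (cnt n x i) / real n"
  by (simp add: alpha_def cnt_def)

lemma cnt_le: "cnt n x i \<le> n"
proof -
  have "cnt n x i \<le> card {..<n}" unfolding cnt_def by (intro card_mono) auto
  then show ?thesis by simp
qed

lemma sum_ofbool: "(\<Sum>w<n. (if x w = j then 1 else 0) :: real) = real (cnt n x j)"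
proof -
  have "(\<Sum>w<n. (if x w = j then 1 else 0) :: real) = (\<Sum>w\<in>{w\<in>{..<n}. x w = j}. 1)"
    by (simp add: sum.If_cases Int_def)
  then show ?thesis by (simp add: cnt_def)
qed

lemma sum_if_gen: "(\<Sum>w<n. (if x w = j then a else b) :: real) = real (cnt n x j) * a + (real n - real (cnt n x j)) * b"
proof -
  have "(\<Sum>w<n. (if x w = j then a else b) :: real) = (\<Sum>w<n. b + (a - b) * (if x w = j then 1 else 0))"
    by (intro sum.cong) auto
  also have "\<dots> = real n * b + (a - b) * real (cnt n x j)"
    by (simp add: sum.distrib sum_distrib_left[symmetric] sum_ofbool)
  finally show ?thesis by (simp add: algebra_simps)
qed

lemma nn_int_vertex:
  fixes M :: "nat pmf"
  shows "(\<integral>\<^sup>+w. ennreal (exp (\<mu> * (if w = i then 1 else 0))) \<partial>M) = ennreal (1 + (exp \<mu> - 1) * pmf M i)"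
proof -
  have int: "integrable M (\<lambda>w. exp (\<mu> * (if w = i then 1 else 0)))"
    by (rule measure_pmf.integrable_const_bound[where B="max 1 (exp \<mu>)"]) auto
  have "(\<integral>\<^sup>+w. ennreal (exp (\<mu> * (if w = i then 1 else 0))) \<partial>M) =
      ennreal (measure_pmf.expectation M (\<lambda>w. exp (\<mu> * (if w = i then 1 else 0))))"
    by (intro nn_integral_eq_integral int) auto
  also have "measure_pmf.expectation M (\<lambda>w. exp (\<mu> * (if w = i then 1 else 0))) = 1 + (exp \<mu> - 1) * pmf M i"
  proof -
    have "(\<lambda>w. exp (\<mu> * (if w = i then 1 else 0))) = (\<lambda>w. 1 + (exp \<mu> - 1) * indicator {i} w)"
      by (auto simp: indicator_def)
    moreover have "measure_pmf.expectation M (\<lambda>w. 1 + (exp \<mu> - 1) * indicator {i} w) = 1 + (exp \<mu> - 1) * pmf M i"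
      using measure_pmf.integrable_const_bound[where M=M and f="indicat_real {i}" and B=1]
      by (subst Bochner_Integration.integral_add) (auto simp: measure_pmf_single)
    ultimately show ?thesis by simp
  qed
  finally show ?thesis .
qed

lemma mgf_step:
  "(\<integral>\<^sup>+y. ennreal (exp (\<mu> * real (cnt n y i))) \<partial>step p n x) =
     ennreal (\<Prod>v<n. 1 + (exp \<mu> - 1) * pmf (vertex_update p n x v) i)"
proof -
  have eq: "ennreal (exp (\<mu> * real (cnt n y i))) = (\<Prod>v<n. ennreal (exp (\<mu> * (if y v = i then 1 else 0))))" for y
  proof -
    have "\<mu> * real (cnt n y i) = (\<Sum>v<n. \<mu> * (if y v = i then 1 else 0))"
      by (simp add: sum_distrib_left[symmetric] sum_ofbool)
    then have "exp (\<mu> * real (cnt n y i)) = (\<Prod>v<n. exp (\<mu> * (if y v = i then 1 else 0)))"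
      by (simp add: exp_sum)
    then show ?thesis by (simp add: prod_ennreal)
  qed
  have "(\<integral>\<^sup>+y. ennreal (exp (\<mu> * real (cnt n y i))) \<partial>step p n x) =
     (\<Prod>v<n. \<integral>\<^sup>+w. ennreal (exp (\<mu> * (if w = i then 1 else 0))) \<partial>vertex_update p n x v)"
    unfolding eq step_def
    by (rule nn_integral_prod_Pi_pmf[where f="\<lambda>v w. ennreal (exp (\<mu> * (if w = i then 1 else 0)))"]) simp
  also have "\<dots> = (\<Prod>v<n. ennreal (1 + (exp \<mu> - 1) * pmf (vertex_update p n x v) i))"
    by (simp add: nn_int_vertex)
  also have "\<dots> = ennreal (\<Prod>v<n. 1 + (exp \<mu> - 1) * pmf (vertex_update p n x v) i)"
  proof (rule prod_ennreal)
    fix v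
    have "0 \<le> pmf (vertex_update p n x v) i" "pmf (vertex_update p n x v) i \<le> 1" by (auto simp: pmf_le_1)
    then show "0 \<le> 1 + (exp \<mu> - 1) * pmf (vertex_update p n x v) i"
    proof (cases "exp \<mu> \<ge> 1")
      case True
      then show ?thesis using \<open>0 \<le> pmf (vertex_update p n x v) i\<close> by simp
    next
      case False
      then have "(exp \<mu> - 1) * 1 \<le> (exp \<mu> - 1) * pmf (vertex_update p n x v) i"
        using \<open>pmf (vertex_update p n x v) i \<le> 1\<close> by (intro mult_left_mono_neg) auto
      then show ?thesis by (smt (verit) exp_gt_zero)
    qed
  qed
  finally show ?thesis .
qed



lemma div2: "(\<Sum>a\<in>A. f a / c) / c = (\<Sum>a\<in>A. f a) / ((c::real)*c)"
  by (simp add: sum_divide_distrib)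
lemma div3: "(\<Sum>a\<in>A. (\<Sum>b\<in>B. g a b / c) / c) / c = (\<Sum>a\<in>A. \<Sum>b\<in>B. g a b) / ((c::real)*c*c)"
  by (simp add: sum_divide_distrib)

lemma pmf_unif_int: "n > 0 \<Longrightarrow> measure_pmf.expectation (unif n) f = (\<Sum>w<n. f w) / real n"
  unfolding unif_def by (subst integral_pmf_of_set) auto

lemma pmf_vu3:
  assumes "n > 0"
  shows "pmf (vertex_update ThreeMajority n x v) i =
    (real n * real (cnt n x i)^2 + (real n^2 - S2 n x) * real (cnt n x i)) / real n^3"
proof -
  define X where "X = real (cnt n x i)"
  have inner: "(\<Sum>w3<n. indicator {i} (if x w1 = x w2 then x w1 else x w3) :: real) =
      (if x w2 = x w1 then (if x w1 = i then real n else 0) else X)" for w1 w2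
  proof (cases "x w1 = x w2")
    case True then show ?thesis by (auto simp: indicator_def)
  next
    case False
    have "(\<Sum>w3<n. indicator {i} (if x w1 = x w2 then x w1 else x w3) :: real) =
        (\<Sum>w3<n. if x w3 = i then 1 else 0)"
      using False by (intro sum.cong) (auto simp: indicator_def)
    then show ?thesis using False by (simp add: sum_ofbool X_def)
  qed
  have mid: "(\<Sum>w2<n. (\<Sum>w3<n. indicator {i} (if x w1 = x w2 then x w1 else x w3) :: real)) =
      real (cnt n x (x w1)) * (if x w1 = i then real n else 0) + (real n - real (cnt n x (x w1))) * X" for w1
    unfolding inner by (rule sum_if_gen)
  have outer: "(\<Sum>w1<n. (\<Sum>w2<n. (\<Sum>w3<n. indicator {i} (if x w1 = x w2 then x w1 else x w3) :: real))) =
     real n * X^2 + (real n^2 - S2 n x) * X"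
  proof -
    have a: "(\<Sum>w1<n. real (cnt n x (x w1)) * (if x w1 = i then real n else 0)) =
        (\<Sum>w1<n. if x w1 = i then real n * X else 0)"
      by (intro sum.cong) (auto simp: X_def)
    have b: "(\<Sum>w1<n. if x w1 = i then real n * X else 0) = X * (real n * X)"
      by (simp add: sum_if_gen X_def)
    show ?thesis
      unfolding mid sum.distrib a b
      by (simp add: S2_def sum_distrib_left[symmetric] sum_distrib_right[symmetric] sum_subtractf
            algebra_simps power2_eq_square)
  qed
  have "pmf (vertex_update ThreeMajority n x v) i =
      (\<Sum>w1<n. (\<Sum>w2<n. (\<Sum>w3<n. indicator {i} (if x w1 = x w2 then x w1 else x w3) :: real) / real n) / real n) / real n"
    by (simp add: vertex_update_def pmf_bind pmf_unif_int assms div3 mult.assoc)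
  also have "\<dots> = (\<Sum>w1<n. (\<Sum>w2<n. (\<Sum>w3<n. indicator {i} (if x w1 = x w2 then x w1 else x w3) :: real))) / real n^3"
    unfolding div3 power3_eq_cube by (simp add: mult_ac)
  finally show ?thesis unfolding outer X_def .
qed

lemma pmf_vu2:
  assumes "n > 0"
  shows "pmf (vertex_update TwoChoices n x v) i =
    (real (cnt n x i)^2 + (real n^2 - S2 n x) * (if x v = i then 1 else 0)) / real n^2"
proof -
  define X where "X = real (cnt n x i)"
  define B where "B = (if x v = i then 1 else 0 :: real)"
  have inner: "(\<Sum>w2<n. indicator {i} (if x w1 = x w2 then x w1 else x v) :: real) =
      real (cnt n x (x w1)) * (if x w1 = i then 1 else 0) + (real n - real (cnt n x (x w1))) * B" for w1
  proof -
    have "(\<Sum>w2<n. indicator {i} (if x w1 = x w2 then x w1 else x v) :: real) =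
       (\<Sum>w2<n. if x w2 = x w1 then (if x w1 = i then 1 else 0) else B)"
      by (intro sum.cong) (auto simp: indicator_def B_def)
    then show ?thesis by (simp add: sum_if_gen)
  qed
  have outer: "(\<Sum>w1<n. (\<Sum>w2<n. indicator {i} (if x w1 = x w2 then x w1 else x v) :: real)) =
      X^2 + (real n^2 - S2 n x) * B"
  proof -
    have a: "(\<Sum>w1<n. real (cnt n x (x w1)) * (if x w1 = i then 1 else 0)) =
        (\<Sum>w1<n. if x w1 = i then X else 0)"
      by (intro sum.cong) (auto simp: X_def)
    have b: "(\<Sum>w1<n. if x w1 = i then X else 0) = X * X"
      by (simp add: sum_if_gen X_def)
    show ?thesis
      unfolding inner sum.distrib a b
      by (simp add: S2_def sum_distrib_left[symmetric] sum_distrib_right[symmetric] sum_subtractf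
            algebra_simps power2_eq_square)
  qed
  have "pmf (vertex_update TwoChoices n x v) i =
      (\<Sum>w1<n. (\<Sum>w2<n. indicator {i} (if x w1 = x w2 then x w1 else x v) :: real) / real n) / real n"
    by (simp add: vertex_update_def pmf_bind pmf_unif_int assms div3 div2 mult.assoc)
  also have "\<dots> = (\<Sum>w1<n. (\<Sum>w2<n. indicator {i} (if x w1 = x w2 then x w1 else x v) :: real)) / real n^2"
    unfolding div2 power2_eq_square by (simp add: mult_ac)
  finally show ?thesis unfolding outer X_def B_def .
qed

lemma S2_ge: "real (cnt n x i)^2 \<le> S2 n x"
proof -
  have "real (cnt n x i)^2 = (\<Sum>w<n. if x w = i then real (cnt n x i) else 0)"
    by (simp add: sum_if_gen power2_eq_square)
  also have "\<dots> \<le> S2 n x" unfolding S2_def by (intro sum_mono) auto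
  finally show ?thesis .
qed

lemma S2_nonneg: "0 \<le> S2 n x" unfolding S2_def by (intro sum_nonneg) auto

lemma S2_gamma:
  assumes "n > 0" "\<forall>v<n. x v \<in> {1..k}"
  shows "S2 n x = real n^2 * gamma n k x"
proof -
  have "S2 n x = (\<Sum>j\<in>{1..k}. (\<Sum>w\<in>{w\<in>{..<n}. x w = j}. real (cnt n x (x w))))"
    unfolding S2_def using assms(2) by (intro sum.group[symmetric]) auto
  also have "\<dots> = (\<Sum>j\<in>{1..k}. real (cnt n x j)^2)"
    by (intro sum.cong refl) (simp add: cnt_def power2_eq_square)
  also have "\<dots> = real n^2 * gamma n k x"
    using assms(1) by (simp add: gamma_def alpha_cnt power_divide sum_distrib_left)
  finally show ?thesis .
qed

definition Inv :: "nat \<Rightarrow> nat \<Rightarrow> config \<Rightarrow> bool" where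
  "Inv n k x = (\<forall>v<n. x v \<in> {1..k})"

lemma set_unif: "n > 0 \<Longrightarrow> set_pmf (unif n) = {..<n}"
  unfolding unif_def by (subst set_pmf_of_set) auto

lemma set_vu: "n > 0 \<Longrightarrow> v < n \<Longrightarrow> set_pmf (vertex_update p n x v) \<subseteq> x ` {..<n}"
  by (cases p) (auto simp: vertex_update_def set_unif)

lemma Inv_step: "Inv n k x \<Longrightarrow> y \<in> set_pmf (step p n x) \<Longrightarrow> Inv n k y"
proof -
  assume I: "Inv n k x" and y: "y \<in> set_pmf (step p n x)"
  show "Inv n k y" unfolding Inv_def
  proof (intro allI impI)
    fix v assume v: "v < n"
    then have "y v \<in> set_pmf (vertex_update p n x v)"
      using y by (auto simp: step_def set_Pi_pmf PiE_dflt_def)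
    then have "y v \<in> x ` {..<n}" using set_vu[of n v p x] v by auto
    then show "y v \<in> {1..k}" using I by (auto simp: Inv_def)
  qed
qed



lemma factor_nonneg:
  fixes q :: real assumes "0 \<le> q" "q \<le> 1"
  shows "0 \<le> 1 + (exp \<mu> - 1) * q"
proof (cases "exp \<mu> \<ge> 1")
  case True then show ?thesis using assms by simp
next
  case False
  then have "(exp \<mu> - 1) * 1 \<le> (exp \<mu> - 1) * q"
    using assms by (intro mult_left_mono_neg) auto
  then show ?thesis by (smt (verit) exp_gt_zero)
qed

lemma mgf_sum_bound:
  "(\<integral>\<^sup>+y. ennreal (exp (\<mu> * real (cnt n y i))) \<partial>step p n x) \<le>
     ennreal (exp ((exp \<mu> - 1) * (\<Sum>v<n. pmf (vertex_update p n x v) i)))"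
proof -
  have "(\<Prod>v<n. 1 + (exp \<mu> - 1) * pmf (vertex_update p n x v) i) \<le>
      (\<Prod>v<n. exp ((exp \<mu> - 1) * pmf (vertex_update p n x v) i))"
  proof (intro prod_mono conjI)
    fix v
    show "0 \<le> 1 + (exp \<mu> - 1) * pmf (vertex_update p n x v) i"
      by (rule factor_nonneg) (auto simp: pmf_le_1)
    show "1 + (exp \<mu> - 1) * pmf (vertex_update p n x v) i \<le> exp ((exp \<mu> - 1) * pmf (vertex_update p n x v) i)"
      by (rule exp_ge_add_one_self)
  qed
  also have "\<dots> = exp ((exp \<mu> - 1) * (\<Sum>v<n. pmf (vertex_update p n x v) i))"
    by (simp add: exp_sum sum_distrib_left)
  finally show ?thesis unfolding mgf_step by (simp add: ennreal_leI)
qed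

lemma prod_if_split:
  "(\<Prod>v<n. (if x v = i then a else b) :: real) = a ^ cnt n x i * b ^ (n - cnt n x i)"
proof -
  have e: "(\<Prod>v<n. (if x v = i then a else b) :: real) =
      (\<Prod>v\<in>{..<n} \<inter> {v. x v = i}. a) * (\<Prod>v\<in>{..<n} - {v. x v = i}. b)"
    using prod.If_cases[where P="\<lambda>v. x v = i" and h="\<lambda>_. a" and g="\<lambda>_. b" and A="{..<n}"]
    by (simp add: Diff_eq)
  have c1: "card ({..<n} \<inter> {v. x v = i}) = cnt n x i"
    unfolding cnt_def by (simp add: Int_def conj_commute)
  have c2: "card ({..<n} - {v. x v = i}) = n - cnt n x i"
  proof -
    have "{..<n} - {v. x v = i} = {..<n} - {v\<in>{..<n}. x v = i}" by auto
    moreover have "card ({..<n} - {v\<in>{..<n}. x v = i}) = n - card {v\<in>{..<n}. x v = i}"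
      by (subst card_Diff_subset) auto
    ultimately show ?thesis unfolding cnt_def by simp
  qed
  show ?thesis unfolding e by (simp add: c1 c2)
qed

lemma exp_le_quad: "0 \<le> (x::real) \<Longrightarrow> x \<le> 1 \<Longrightarrow> exp x - 1 \<le> x + x^2"
  using exp_bound[of x] by simp

lemma one_minus_exp_neg: "0 \<le> (x::real) \<Longrightarrow> x - x^2 \<le> 1 - exp (-x)"
proof -
  assume x: "0 \<le> x"
  have "1 + x \<le> exp x" by simp
  then have "exp (-x) \<le> 1 / (1 + x)" using x by (simp add: exp_minus field_simps)
  also have "\<dots> \<le> 1 - x + x^2"
  proof -
    have "1 \<le> (1 - x + x^2) * (1 + x)" using x by (simp add: algebra_simps power2_eq_square power3_eq_cube[symmetric])
    then show ?thesis using x by (simp add: field_simps)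
  qed
  finally show ?thesis by simp
qed



lemma alg3U:
  fixes X n l X0 cu :: real
  assumes "0 < n" "0 \<le> X" "X \<le> n" "0 \<le> l" "X \<le> (1+cu)*X0"
  shows "(l + l^2) * (X + X^2/n) \<le> l*X + (l*(1+cu)^2*X0^2/n + 2*l^2*(1+cu)*X0)"
proof -
  have "X*X \<le> X*n" using assms by (intro mult_left_mono) auto
  then have q: "X^2/n \<le> X" using assms by (simp add: field_simps power2_eq_square)
  have "X^2 \<le> ((1+cu)*X0)^2" using assms by (intro power_mono) auto
  then have a: "l*(X^2/n) \<le> l*((1+cu)^2*X0^2/n)"
    using assms by (intro mult_left_mono divide_right_mono) (auto simp: power_mult_distrib)
  have b: "l^2*X \<le> l^2*((1+cu)*X0)" using assms by (intro mult_left_mono) auto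
  have c: "l^2*(X^2/n) \<le> l^2*((1+cu)*X0)" using q assms by (intro mult_left_mono) auto
  have "(l + l^2) * (X + X^2/n) = l*X + l*(X^2/n) + l^2*X + l^2*(X^2/n)" by (simp add: algebra_simps add_divide_distrib)
  also have "\<dots> \<le> l*X + l*((1+cu)^2*X0^2/n) + l^2*((1+cu)*X0) + l^2*((1+cu)*X0)" using a b c by linarith
  also have "\<dots> = l*X + (l*(1+cu)^2*X0^2/n + 2*l^2*(1+cu)*X0)" by (simp add: algebra_simps)
  finally show ?thesis .
qed

lemma alg3D:
  fixes X n l X0 cu cw S :: real
  assumes "0 < n" "0 \<le> X" "X \<le> n" "0 \<le> l" "X \<le> (1+cu)*X0" "0 < cw" "cw < 1/2"
    and "S * (1 - cw) \<le> n * X"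
  shows "(exp (-l) - 1) * ((n*X^2 + (n^2 - S)*X)/n^2) \<le>
     -l*X + (l^2*(1+cu)*X0 + l*(cw/(1-cw))*(1+cu)^2*X0^2/n)"
proof -
  define k where "k = cw/(1-cw)"
  have k: "0 \<le> k" "k \<le> 1" using assms by (auto simp: k_def field_simps)
  have "X*X \<le> X*n" using assms by (intro mult_left_mono) auto
  then have q: "X^2/n \<le> X" using assms by (simp add: field_simps power2_eq_square)
  define L where "L = X - k*X^2/n"
  have QL: "L \<le> (n*X^2 + (n^2 - S)*X)/n^2"
  proof -
    have "S \<le> n*X/(1-cw)" using assms by (simp add: field_simps)
    then have "S*X/n^2 \<le> (n*X/(1-cw))*X/n^2"
      using assms by (intro divide_right_mono mult_right_mono) auto
    also have "\<dots> = X^2/n + k*X^2/n" using assms by (simp add: k_def field_simps power2_eq_square)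
    finally have "S*X/n^2 \<le> X^2/n + k*X^2/n" .
    moreover have "(n*X^2 + (n^2 - S)*X)/n^2 = X^2/n + X - S*X/n^2"
      using assms by (simp add: field_simps power2_eq_square)
    ultimately show ?thesis unfolding L_def by linarith
  qed
  have L0: "0 \<le> L"
  proof -
    have "k*(X^2/n) \<le> 1*X" using k q assms by (intro mult_mono) auto
    then show ?thesis unfolding L_def by simp
  qed
  have e1: "0 \<le> 1 - exp (-l)" using assms by simp
  have e2: "l - l^2 \<le> 1 - exp (-l)" using one_minus_exp_neg assms by simp
  have "(exp (-l) - 1) * ((n*X^2 + (n^2 - S)*X)/n^2) \<le> (exp (-l) - 1) * L"
    using QL e1 by (intro mult_left_mono_neg) auto
  also have "\<dots> \<le> -(l - l^2) * L"
    using L0 e2 by (simp add: mult_right_mono)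
  also have "\<dots> = -l*X + l*k*(X^2/n) + l^2*L" by (simp add: L_def algebra_simps diff_divide_distrib)
  also have "\<dots> \<le> -l*X + l*k*((1+cu)^2*X0^2/n) + l^2*((1+cu)*X0)"
  proof -
    have "X^2 \<le> ((1+cu)*X0)^2" using assms by (intro power_mono) auto
    then have "X^2/n \<le> (1+cu)^2*X0^2/n" using assms by (intro divide_right_mono) (auto simp: power_mult_distrib)
    then have a: "l*k*(X^2/n) \<le> l*k*((1+cu)^2*X0^2/n)" using assms k by (intro mult_left_mono) auto
    have "L \<le> (1+cu)*X0" unfolding L_def using assms k q by (smt (verit) mult_nonneg_nonneg divide_nonneg_pos zero_le_power2)
    then have b: "l^2*L \<le> l^2*((1+cu)*X0)" by (intro mult_left_mono) auto
    show ?thesis using a b by linarith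
  qed
  also have "\<dots> = -l*X + (l^2*(1+cu)*X0 + l*(cw/(1-cw))*(1+cu)^2*X0^2/n)"
    by (simp add: k_def algebra_simps)
  finally show ?thesis .
qed

lemma alg2D:
  fixes X n l X0 cu cw S :: real
  assumes "0 < n" "0 \<le> X" "X \<le> n" "0 \<le> l" "l \<le> 1" "X \<le> (1+cu)*X0" "0 < cw" "cw < 1/2"
    and "S * (1 - cw) \<le> n * X" and "X^2 \<le> S"
  shows "X * (-l + ((S - X^2)/n^2) * (exp l - 1)) + (n - X) * ((exp (-l) - 1) * (X^2/n^2)) \<le>
     -l*X + (l*(cw/(1-cw)) + 3*l^2)*(1+cu)^2*X0^2/n"
proof -
  define k where "k = cw/(1-cw)"
  have k: "0 \<le> k" "k \<le> 1" using assms by (auto simp: k_def field_simps)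
  define r where "r = (S - X^2)/n^2"
  have r0: "0 \<le> r" using assms by (simp add: r_def)
  define P where "P = X*S/n^2"
  have P: "P \<le> X^2/n + k*X^2/n"
  proof -
    have "S \<le> n*X/(1-cw)" using assms by (simp add: field_simps)
    then have "X*S/n^2 \<le> X*(n*X/(1-cw))/n^2"
      using assms by (intro divide_right_mono mult_left_mono) auto
    also have "\<dots> = X^2/n + k*X^2/n" using assms by (simp add: k_def field_simps power2_eq_square)
    finally show ?thesis by (simp add: P_def)
  qed
  have e1: "exp l - 1 \<le> l + l^2" using exp_le_quad assms by simp
  have e2: "l - l^2 \<le> 1 - exp (-l)" using one_minus_exp_neg assms by simp
  have nX: "0 \<le> n - X" using assms by simp
  have A: "X * r * (exp l - 1) \<le> X * r * (l + l^2)"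
    using e1 r0 assms by (intro mult_left_mono) auto
  have B: "(n - X) * ((exp (-l) - 1) * (X^2/n^2)) \<le> (n - X) * (-(l - l^2) * (X^2/n^2))"
    using e2 nX by (intro mult_left_mono mult_right_mono) auto
  have "X * (-l + r * (exp l - 1)) + (n - X) * ((exp (-l) - 1) * (X^2/n^2)) \<le>
        -l*X + X * r * (l + l^2) + (n - X) * (-(l - l^2) * (X^2/n^2))"
    using A B by (simp add: algebra_simps)
  also have "\<dots> = -l*X + l*(P - X^2/n) + l^2*(P - 2*X^3/n^2 + X^2/n)"
    using assms by (simp add: r_def P_def field_simps power2_eq_square power3_eq_cube)
  also have "\<dots> \<le> -l*X + l*(k*X^2/n) + l^2*(3*X^2/n)"
  proof -
    have a: "l*(P - X^2/n) \<le> l*(k*X^2/n)" using P assms by (intro mult_left_mono) auto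
    have "X^3/n^2 \<ge> 0" using assms by simp
    moreover have "k*X^2/n \<le> X^2/n" using k assms by (intro divide_right_mono mult_left_le_one_le) auto
    ultimately have "P - 2*X^3/n^2 + X^2/n \<le> 3*X^2/n" using P by linarith
    then have b: "l^2*(P - 2*X^3/n^2 + X^2/n) \<le> l^2*(3*X^2/n)" by (intro mult_left_mono) auto
    show ?thesis using a b by linarith
  qed
  also have "\<dots> = -l*X + (l*k + 3*l^2)*(X^2/n)" by (simp add: algebra_simps)
  also have "\<dots> \<le> -l*X + (l*k + 3*l^2)*((1+cu)^2*X0^2/n)"
  proof -
    have "X^2 \<le> ((1+cu)*X0)^2" using assms by (intro power_mono) auto
    then have "X^2/n \<le> (1+cu)^2*X0^2/n" using assms by (intro divide_right_mono) (auto simp: power_mult_distrib)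
    moreover have "0 \<le> l*k + 3*l^2" using assms k by simp
    ultimately have "(l*k + 3*l^2)*(X^2/n) \<le> (l*k + 3*l^2)*((1+cu)^2*X0^2/n)" by (rule mult_left_mono)
    then show ?thesis by simp
  qed
  also have "\<dots> = -l*X + (l*(cw/(1-cw)) + 3*l^2)*(1+cu)^2*X0^2/n" by (simp add: k_def mult.assoc)
  finally show ?thesis unfolding r_def .
qed



lemma S2_le: "S2 n x \<le> real n^2"
proof -
  have "S2 n x \<le> (\<Sum>w<n. real n)" unfolding S2_def using cnt_le by (intro sum_mono) auto
  then show ?thesis by (simp add: power2_eq_square)
qed

lemma super_wrap:
  assumes "(\<integral>\<^sup>+y. ennreal (exp (\<mu> * real (cnt n y i))) \<partial>step p n x) \<le> ennreal (exp (\<mu> * real (cnt n x i) + D))"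
  shows "(\<integral>\<^sup>+y. ennreal (exp (\<mu> * real (cnt n y i) - real (Suc t) * D)) \<partial>step p n x) \<le>
           ennreal (exp (\<mu> * real (cnt n x i) - real t * D))"
proof -
  have "(\<integral>\<^sup>+y. ennreal (exp (\<mu> * real (cnt n y i) - real (Suc t) * D)) \<partial>step p n x) =
        (\<integral>\<^sup>+y. ennreal (exp (\<mu> * real (cnt n y i))) * ennreal (exp (- real (Suc t) * D)) \<partial>step p n x)"
    by (intro nn_integral_cong) (simp add: ennreal_mult[symmetric] exp_diff exp_minus field_simps exp_add)
  also have "\<dots> = (\<integral>\<^sup>+y. ennreal (exp (\<mu> * real (cnt n y i))) \<partial>step p n x) * ennreal (exp (- real (Suc t) * D))"
    by (simp add: nn_integral_multc)
  also have "\<dots> \<le> ennreal (exp (\<mu> * real (cnt n x i) + D)) * ennreal (exp (- real (Suc t) * D))"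
    using assms by (intro mult_right_mono) auto
  also have "\<dots> = ennreal (exp (\<mu> * real (cnt n x i) - real t * D))"
    by (simp add: ennreal_mult[symmetric] mult_exp_exp algebra_simps)
  finally show ?thesis .
qed

lemma step3U:
  assumes "n > 0" "0 \<le> l" "l \<le> 1" "real (cnt n x i) \<le> (1+cu)*X0"
  shows "(\<integral>\<^sup>+y. ennreal (exp (l * real (cnt n y i))) \<partial>step ThreeMajority n x) \<le>
     ennreal (exp (l * real (cnt n x i) + (l*(1+cu)^2*X0^2/n + 2*l^2*(1+cu)*X0)))"
proof -
  define X where "X = real (cnt n x i)"
  have X: "0 \<le> X" "X \<le> real n" using cnt_le[of n x i] by (auto simp: X_def)
  have sum: "(\<Sum>v<n. pmf (vertex_update ThreeMajority n x v) i) = (real n*X^2 + (real n^2 - S2 n x)*X)/real n^2"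
    using assms(1) by (simp add: pmf_vu3 X_def power2_eq_square power3_eq_cube)
  have s0: "0 \<le> (\<Sum>v<n. pmf (vertex_update ThreeMajority n x v) i)" by (intro sum_nonneg) auto
  have s1: "(real n*X^2 + (real n^2 - S2 n x)*X)/real n^2 \<le> X + X^2/real n"
  proof -
    have "S2 n x * X \<ge> 0" using S2_nonneg X by simp
    then have "(real n*X^2 + (real n^2 - S2 n x)*X)/real n^2 \<le> (real n*X^2 + real n^2*X)/real n^2"
      by (intro divide_right_mono) (auto simp: algebra_simps)
    also have "\<dots> = X + X^2/real n" using assms(1) by (simp add: field_simps power2_eq_square)
    finally show ?thesis .
  qed
  have "(exp l - 1) * (\<Sum>v<n. pmf (vertex_update ThreeMajority n x v) i) \<le> (exp l - 1) * (X + X^2/real n)"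
    using s1 sum assms by (intro mult_left_mono) auto
  also have "\<dots> \<le> (l + l^2) * (X + X^2/real n)"
    using exp_le_quad[of l] assms X by (intro mult_right_mono) auto
  also have "\<dots> \<le> l*X + (l*(1+cu)^2*X0^2/n + 2*l^2*(1+cu)*X0)"
    using alg3U[of "real n" X l cu X0] assms X by (simp add: X_def)
  finally have "(exp l - 1) * (\<Sum>v<n. pmf (vertex_update ThreeMajority n x v) i) \<le> l*X + (l*(1+cu)^2*X0^2/n + 2*l^2*(1+cu)*X0)" .
  then show ?thesis using mgf_sum_bound[where \<mu>=l and n=n and p=ThreeMajority and x=x and i=i]
    by (elim order_trans) (simp add: X_def ennreal_leI)
qed

lemma step3D:
  assumes "n > 0" "0 \<le> l" "real (cnt n x i) \<le> (1+cu)*X0" "0 < cw" "cw < 1/2"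
    and "Inv n k x" and "\<not> alpha n x i \<le> (1 - cw) * gamma n k x"
  shows "(\<integral>\<^sup>+y. ennreal (exp ((-l) * real (cnt n y i))) \<partial>step ThreeMajority n x) \<le>
     ennreal (exp ((-l) * real (cnt n x i) + (l^2*(1+cu)*X0 + l*(cw/(1-cw))*(1+cu)^2*X0^2/n)))"
proof -
  define X where "X = real (cnt n x i)"
  have X: "0 \<le> X" "X \<le> real n" using cnt_le[of n x i] by (auto simp: X_def)
  have sum: "(\<Sum>v<n. pmf (vertex_update ThreeMajority n x v) i) = (real n*X^2 + (real n^2 - S2 n x)*X)/real n^2"
    using assms(1) by (simp add: pmf_vu3 X_def power2_eq_square power3_eq_cube)
  have g: "S2 n x = real n^2 * gamma n k x" using S2_gamma assms(1,6) by (simp add: Inv_def)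
  have w: "S2 n x * (1 - cw) \<le> real n * X"
  proof -
    have "(1 - cw) * gamma n k x < X / real n" using assms(7) by (simp add: alpha_cnt X_def)
    then have "(1 - cw) * gamma n k x * real n^2 < X / real n * real n^2"
      using assms(1) by (intro mult_strict_right_mono) auto
    then show ?thesis using assms(1) g by (simp add: power2_eq_square field_simps)
  qed
  have "(exp (-l) - 1) * (\<Sum>v<n. pmf (vertex_update ThreeMajority n x v) i) \<le>
      -l*X + (l^2*(1+cu)*X0 + l*(cw/(1-cw))*(1+cu)^2*X0^2/n)"
    unfolding sum using alg3D[of "real n" X l cu X0 cw "S2 n x"] assms X w by (simp add: X_def)
  then show ?thesis using mgf_sum_bound[where \<mu>="-l" and n=n and p=ThreeMajority and x=x and i=i]
    by (elim order_trans) (simp add: X_def ennreal_leI)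
qed



lemma prod_2ch:
  assumes "n > 0"
  shows "(\<Prod>v<n. 1 + (exp \<mu> - 1) * pmf (vertex_update TwoChoices n x v) i) =
    (1 + (exp \<mu> - 1) * ((real (cnt n x i)^2 + (real n^2 - S2 n x)) / real n^2)) ^ cnt n x i *
    (1 + (exp \<mu> - 1) * (real (cnt n x i)^2 / real n^2)) ^ (n - cnt n x i)"
proof -
  have "(\<Prod>v<n. 1 + (exp \<mu> - 1) * pmf (vertex_update TwoChoices n x v) i) =
     (\<Prod>v<n. if x v = i then 1 + (exp \<mu> - 1) * ((real (cnt n x i)^2 + (real n^2 - S2 n x)) / real n^2)
             else 1 + (exp \<mu> - 1) * (real (cnt n x i)^2 / real n^2))"
    using assms by (intro prod.cong) (auto simp: pmf_vu2)
  then show ?thesis by (simp add: prod_if_split)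
qed

lemma pow_exp_le:
  fixes g a :: real
  assumes "0 \<le> g" "g \<le> exp a"
  shows "g ^ m \<le> exp (real m * a)"
proof -
  have "g ^ m \<le> exp a ^ m" using assms by (intro power_mono) auto
  then show ?thesis by (simp add: exp_of_nat_mult)
qed

lemma step2U:
  assumes "n > 0" "0 \<le> l" "l \<le> 1" "real (cnt n x i) \<le> (1+cu)*X0"
  shows "(\<integral>\<^sup>+y. ennreal (exp (l * real (cnt n y i))) \<partial>step TwoChoices n x) \<le>
     ennreal (exp (l * real (cnt n x i) + (l + l^2)*(1+cu)^2*X0^2/n))"
proof -
  define X where "X = real (cnt n x i)"
  have X: "0 \<le> X" "X \<le> real n" using cnt_le[of n x i] by (auto simp: X_def)
  define qh where "qh = (X^2 + (real n^2 - S2 n x)) / real n^2"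
  define qn where "qn = X^2 / real n^2"
  have qh: "0 \<le> qh" "qh \<le> 1" using S2_le[of n x] S2_ge[of n x i] assms(1) by (auto simp: qh_def X_def)
  have qn: "0 \<le> qn" "qn \<le> 1" using X assms(1) by (auto simp: qn_def power_mono)
  have e: "0 \<le> exp l - 1" using assms by simp
  have h: "(1 + (exp l - 1) * qh) ^ cnt n x i \<le> exp (X * l)"
    unfolding X_def
  proof (rule pow_exp_le)
    show "0 \<le> 1 + (exp l - 1) * qh" using qh by (rule factor_nonneg)
    have "(exp l - 1) * qh \<le> (exp l - 1) * 1" using e qh by (intro mult_left_mono) auto
    then show "1 + (exp l - 1) * qh \<le> exp l" by simp
  qed
  have nn: "(1 + (exp l - 1) * qn) ^ (n - cnt n x i) \<le> exp ((real n - X) * ((exp l - 1) * qn))"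
  proof -
    have "(1 + (exp l - 1) * qn) ^ (n - cnt n x i) \<le> exp (real (n - cnt n x i) * ((exp l - 1) * qn))"
      by (rule pow_exp_le) (use qn factor_nonneg in auto)
    then show ?thesis using cnt_le[of n x i] by (simp add: X_def of_nat_diff)
  qed
  have alg: "X * l + (real n - X) * ((exp l - 1) * qn) \<le> l * X + (l + l^2)*(1+cu)^2*X0^2/n"
  proof -
    have "(real n - X) * ((exp l - 1) * qn) \<le> real n * ((l + l^2) * qn)"
      using X qn e exp_le_quad[of l] assms by (intro mult_mono) (auto intro: mult_right_mono)
    also have "\<dots> = (l + l^2) * (X^2 / real n)" using assms(1) by (simp add: qn_def power2_eq_square)
    also have "\<dots> \<le> (l + l^2) * ((1+cu)^2*X0^2/n)"
    proof -
      have "X^2 \<le> ((1+cu)*X0)^2" using assms X by (intro power_mono) (auto simp: X_def)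
      then have "X^2/n \<le> (1+cu)^2*X0^2/n" by (intro divide_right_mono) (auto simp: power_mult_distrib)
      then show ?thesis using assms by (intro mult_left_mono) auto
    qed
    finally show ?thesis by (simp add: algebra_simps)
  qed
  have "(1 + (exp l - 1) * qh) ^ cnt n x i * (1 + (exp l - 1) * qn) ^ (n - cnt n x i) \<le>
      exp (X * l) * exp ((real n - X) * ((exp l - 1) * qn))"
    using h nn qh qn by (intro mult_mono) (auto intro!: zero_le_power factor_nonneg)
  also have "\<dots> \<le> exp (l * X + (l + l^2)*(1+cu)^2*X0^2/n)"
    using alg by (simp add: mult_exp_exp)
  finally show ?thesis
    unfolding mgf_step prod_2ch[OF assms(1)] qh_def qn_def X_def by (simp add: ennreal_leI)
qed

lemma step2D:
  assumes "n > 0" "0 \<le> l" "l \<le> 1" "real (cnt n x i) \<le> (1+cu)*X0" "0 < cw" "cw < 1/2"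
    and "Inv n k x" and "\<not> alpha n x i \<le> (1 - cw) * gamma n k x"
  shows "(\<integral>\<^sup>+y. ennreal (exp ((-l) * real (cnt n y i))) \<partial>step TwoChoices n x) \<le>
     ennreal (exp ((-l) * real (cnt n x i) + (l*(cw/(1-cw)) + 3*l^2)*(1+cu)^2*X0^2/n))"
proof -
  define X where "X = real (cnt n x i)"
  have X: "0 \<le> X" "X \<le> real n" using cnt_le[of n x i] by (auto simp: X_def)
  define r where "r = (S2 n x - X^2) / real n^2"
  define qh where "qh = (X^2 + (real n^2 - S2 n x)) / real n^2"
  define qn where "qn = X^2 / real n^2"
  have qh: "0 \<le> qh" "qh \<le> 1" using S2_le[of n x] S2_ge[of n x i] assms(1) by (auto simp: qh_def X_def)
  have qn: "0 \<le> qn" "qn \<le> 1" using X assms(1) by (auto simp: qn_def power_mono)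
  have qhr: "qh = 1 - r" using assms(1) by (simp add: qh_def r_def field_simps)
  have g: "S2 n x = real n^2 * gamma n k x" using S2_gamma assms(1,7) by (simp add: Inv_def)
  have w: "S2 n x * (1 - cw) \<le> real n * X"
  proof -
    have "(1 - cw) * gamma n k x < X / real n" using assms(8) by (simp add: alpha_cnt X_def)
    then have "(1 - cw) * gamma n k x * real n^2 < X / real n * real n^2"
      using assms(1) by (intro mult_strict_right_mono) auto
    then show ?thesis using assms(1) g by (simp add: power2_eq_square field_simps)
  qed
  have h: "(1 + (exp (-l) - 1) * qh) ^ cnt n x i \<le> exp (X * (-l + r * (exp l - 1)))"
    unfolding X_def
  proof (rule pow_exp_le)
    show "0 \<le> 1 + (exp (-l) - 1) * qh" using qh by (rule factor_nonneg)
    have "1 + (exp (-l) - 1) * qh = exp (-l) * (1 + r * (exp l - 1))"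
      unfolding qhr by (simp add: algebra_simps exp_minus_inverse mult_exp_exp[symmetric])
    also have "\<dots> \<le> exp (-l) * exp (r * (exp l - 1))"
      by (intro mult_left_mono) auto
    also have "\<dots> = exp (-l + r * (exp l - 1))" by (simp add: mult_exp_exp)
    finally show "1 + (exp (-l) - 1) * qh \<le> exp (-l + r * (exp l - 1))" .
  qed
  have nn: "(1 + (exp (-l) - 1) * qn) ^ (n - cnt n x i) \<le> exp ((real n - X) * ((exp (-l) - 1) * qn))"
  proof -
    have "(1 + (exp (-l) - 1) * qn) ^ (n - cnt n x i) \<le> exp (real (n - cnt n x i) * ((exp (-l) - 1) * qn))"
      by (rule pow_exp_le) (use qn factor_nonneg in auto)
    then show ?thesis using cnt_le[of n x i] by (simp add: X_def of_nat_diff)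
  qed
  have alg: "X * (-l + r * (exp l - 1)) + (real n - X) * ((exp (-l) - 1) * qn) \<le>
      -l*X + (l*(cw/(1-cw)) + 3*l^2)*(1+cu)^2*X0^2/n"
    using alg2D[of "real n" X l cu X0 cw "S2 n x"] assms X w S2_ge[of n x i]
    by (simp add: r_def qn_def X_def)
  have "(1 + (exp (-l) - 1) * qh) ^ cnt n x i * (1 + (exp (-l) - 1) * qn) ^ (n - cnt n x i) \<le>
      exp (X * (-l + r * (exp l - 1))) * exp ((real n - X) * ((exp (-l) - 1) * qn))"
    using h nn qh qn by (intro mult_mono) (auto intro!: zero_le_power factor_nonneg)
  also have "\<dots> \<le> exp (-l*X + (l*(cw/(1-cw)) + 3*l^2)*(1+cu)^2*X0^2/n)"
    using alg by (simp add: mult_exp_exp)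
  finally show ?thesis
    unfolding mgf_step prod_2ch[OF assms(1)] qh_def qn_def X_def by (simp add: ennreal_leI)
qed



lemma arith3U:
  fixes n X0 cu \<epsilon> \<theta> N C1 l :: real
  assumes "0 < X0" "X0 \<le> n" "0 < cu" "0 < \<epsilon>" "\<epsilon> < 1"
    and C1: "C1 = (1-\<epsilon>)*cu/(1+cu)^2" and th: "0 < \<theta>" "\<theta> \<le> \<epsilon>*cu/(4*C1*(1+cu))"
    and N: "0 \<le> N" "N \<le> C1/(X0/n)" and l: "l = \<theta>*X0/n"
  shows "l*X0 - l*((1+cu)*X0) + N*(l*(1+cu)^2*X0^2/n + 2*l^2*(1+cu)*X0) \<le> -(\<theta>*\<epsilon>*cu/2) * n * (X0/n)^2"
proof -
  have n: "0 < n" using assms by simp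
  have C1p: "0 < C1" using assms by simp
  define Y where "Y = X0^2/n"
  have Y: "0 \<le> Y" using n by (simp add: Y_def)
  have D0: "0 \<le> l*(1+cu)^2*X0^2/n + 2*l^2*(1+cu)*X0" using assms n by (simp add: l)
  have "N*(l*(1+cu)^2*X0^2/n + 2*l^2*(1+cu)*X0) \<le> (C1/(X0/n))*(l*(1+cu)^2*X0^2/n + 2*l^2*(1+cu)*X0)"
    using N D0 by (intro mult_right_mono) auto
  also have "\<dots> = Y*((C1*(1+cu)^2)*\<theta> + 2*C1*(1+cu)*\<theta>^2)"
    using n \<open>0 < X0\<close> by (simp add: Y_def l field_simps power2_eq_square)
  also have "C1*(1+cu)^2 = (1-\<epsilon>)*cu" using assms by (simp add: C1)
  finally have ND: "N*(l*(1+cu)^2*X0^2/n + 2*l^2*(1+cu)*X0) \<le> Y*((1-\<epsilon>)*cu*\<theta> + 2*C1*(1+cu)*\<theta>^2)" .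
  have t: "2*C1*(1+cu)*\<theta> \<le> \<epsilon>*cu/2"
  proof -
    have "2*C1*(1+cu)*\<theta> \<le> 2*C1*(1+cu)*(\<epsilon>*cu/(4*C1*(1+cu)))"
      using th C1p assms by (intro mult_left_mono) auto
    also have "\<dots> = \<epsilon>*cu/2"
    proof -
      have "0 < C1*(1+cu)" using C1p \<open>0 < cu\<close> by simp
      then show ?thesis by (simp add: field_simps)
    qed
    finally show ?thesis .
  qed
  have B: "Y*((1-\<epsilon>)*cu*\<theta> + 2*C1*(1+cu)*\<theta>^2) \<le> Y*((1-\<epsilon>)*cu*\<theta> + \<theta>*(\<epsilon>*cu/2))"
  proof -
    have "\<theta> * (2*C1*(1+cu)*\<theta>) \<le> \<theta>*(\<epsilon>*cu/2)" using t th by (intro mult_left_mono) auto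
    then show ?thesis using Y by (intro mult_left_mono) (auto simp: power2_eq_square algebra_simps)
  qed
  have E1: "l*X0 - l*((1+cu)*X0) = -(Y*cu*\<theta>)" using n by (simp add: l Y_def field_simps power2_eq_square)
  have E2: "-(\<theta>*\<epsilon>*cu/2) * n * (X0/n)^2 = Y*(-(\<theta>*\<epsilon>*cu/2))"
    using n by (simp add: Y_def field_simps power2_eq_square)
  have E3: "Y*((1-\<epsilon>)*cu*\<theta> + \<theta>*(\<epsilon>*cu/2)) - Y*cu*\<theta> = Y*(-(\<theta>*\<epsilon>*cu/2))"
    by (simp add: algebra_simps)
  show ?thesis using ND B E1 E2 E3 by linarith
qed

lemma arith3D:
  fixes n X0 cu cd cw \<epsilon> \<theta> N C2 l :: real
  assumes "0 < X0" "X0 \<le> n" "0 < cu" "0 < cd" "0 < cw" "cw < 1/2" "0 < \<epsilon>" "\<epsilon> < 1"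
    and C2: "C2 = (1-cw)*(1-\<epsilon>)*cd/(cw*(1+cu)^2)" and th: "0 < \<theta>" "\<theta> \<le> \<epsilon>*cd/(2*C2*(1+cu))"
    and N: "0 \<le> N" "N \<le> C2/(X0/n)" and l: "l = \<theta>*X0/n"
  shows "-l*X0 - (-l*((1-cd)*X0)) + N*(l^2*(1+cu)*X0 + l*(cw/(1-cw))*(1+cu)^2*X0^2/n) \<le> -(\<theta>*\<epsilon>*cd/2) * n * (X0/n)^2"
proof -
  have n: "0 < n" using assms by simp
  have C2p: "0 < C2" using assms by simp
  define Y where "Y = X0^2/n"
  have Y: "0 \<le> Y" using n by (simp add: Y_def)
  have D0: "0 \<le> l^2*(1+cu)*X0 + l*(cw/(1-cw))*(1+cu)^2*X0^2/n" using assms n by (simp add: l)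
  have "N*(l^2*(1+cu)*X0 + l*(cw/(1-cw))*(1+cu)^2*X0^2/n) \<le> (C2/(X0/n))*(l^2*(1+cu)*X0 + l*(cw/(1-cw))*(1+cu)^2*X0^2/n)"
    using N D0 by (intro mult_right_mono) auto
  also have "\<dots> = Y*((C2*(1+cu)^2*(cw/(1-cw)))*\<theta> + C2*(1+cu)*\<theta>^2)"
    using n \<open>0 < X0\<close> \<open>cw < 1/2\<close> by (simp add: Y_def l field_simps power2_eq_square)
  also have "C2*(1+cu)^2*(cw/(1-cw)) = (1-\<epsilon>)*cd" using assms by (simp add: C2 field_simps)
  finally have ND: "N*(l^2*(1+cu)*X0 + l*(cw/(1-cw))*(1+cu)^2*X0^2/n) \<le> Y*((1-\<epsilon>)*cd*\<theta> + C2*(1+cu)*\<theta>^2)" .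
  have t: "C2*(1+cu)*\<theta> \<le> \<epsilon>*cd/2"
  proof -
    have "C2*(1+cu)*\<theta> \<le> C2*(1+cu)*(\<epsilon>*cd/(2*C2*(1+cu)))"
      using th C2p assms by (intro mult_left_mono) auto
    also have "\<dots> = \<epsilon>*cd/2"
    proof -
      have "0 < C2*(1+cu)" using C2p \<open>0 < cu\<close> by simp
      then show ?thesis by (simp add: field_simps)
    qed
    finally show ?thesis .
  qed
  have B: "Y*((1-\<epsilon>)*cd*\<theta> + C2*(1+cu)*\<theta>^2) \<le> Y*((1-\<epsilon>)*cd*\<theta> + \<theta>*(\<epsilon>*cd/2))"
  proof -
    have "\<theta> * (C2*(1+cu)*\<theta>) \<le> \<theta>*(\<epsilon>*cd/2)" using t th by (intro mult_left_mono) auto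
    then show ?thesis using Y by (intro mult_left_mono) (auto simp: power2_eq_square algebra_simps)
  qed
  have E1: "-l*X0 - (-l*((1-cd)*X0)) = -(Y*cd*\<theta>)" using n by (simp add: l Y_def field_simps power2_eq_square)
  have E2: "-(\<theta>*\<epsilon>*cd/2) * n * (X0/n)^2 = Y*(-(\<theta>*\<epsilon>*cd/2))"
    using n by (simp add: Y_def field_simps power2_eq_square)
  have E3: "Y*((1-\<epsilon>)*cd*\<theta> + \<theta>*(\<epsilon>*cd/2)) - Y*cd*\<theta> = Y*(-(\<theta>*\<epsilon>*cd/2))"
    by (simp add: algebra_simps)
  show ?thesis using ND B E1 E2 E3 by linarith
qed

lemma arith2U:
  fixes n X0 cu \<epsilon> N C1 l :: real
  assumes "0 < X0" "X0 \<le> n" "0 < cu" "0 < \<epsilon>" "\<epsilon> < 1"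
    and C1: "C1 = (1-\<epsilon>)*cu/(1+cu)^2"
    and N: "0 \<le> N" "N \<le> C1/(X0/n)" and l: "l = \<epsilon>/2"
  shows "l*X0 - l*((1+cu)*X0) + N*((l + l^2)*(1+cu)^2*X0^2/n) \<le> -(cu*\<epsilon>^2/4) * n * (X0/n)"
proof -
  have n: "0 < n" using assms by simp
  have D0: "0 \<le> (l + l^2)*(1+cu)^2*X0^2/n" using assms n by (simp add: l)
  have "N*((l + l^2)*(1+cu)^2*X0^2/n) \<le> (C1/(X0/n))*((l + l^2)*(1+cu)^2*X0^2/n)"
    using N D0 by (intro mult_right_mono) auto
  also have "\<dots> = X0*(C1*(1+cu)^2)*(l+l^2)"
    using n \<open>0 < X0\<close> by (simp add: field_simps power2_eq_square)
  also have "C1*(1+cu)^2 = (1-\<epsilon>)*cu" using assms by (simp add: C1)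
  finally have ND: "N*((l + l^2)*(1+cu)^2*X0^2/n) \<le> X0*((1-\<epsilon>)*cu)*(l+l^2)" .
  have key: "(1-\<epsilon>)*(l+l^2) \<le> l - \<epsilon>^2/4"
    using assms by (simp add: l power2_eq_square field_simps)
  have "X0*((1-\<epsilon>)*cu)*(l+l^2) \<le> X0*cu*(l - \<epsilon>^2/4)"
  proof -
    have "X0*cu*((1-\<epsilon>)*(l+l^2)) \<le> X0*cu*(l - \<epsilon>^2/4)" using key assms by (intro mult_left_mono) auto
    then show ?thesis by (simp add: algebra_simps)
  qed
  moreover have "X0*cu*(l - \<epsilon>^2/4) - X0*cu*l = -(cu*\<epsilon>^2/4) * n * (X0/n)" using n by (simp add: algebra_simps)
  moreover have "l*X0 - l*((1+cu)*X0) = -(X0*cu*l)" by (simp add: algebra_simps)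
  ultimately show ?thesis using ND by linarith
qed

lemma arith2D:
  fixes n X0 cu cd cw \<epsilon> N C2 l :: real
  assumes "0 < X0" "X0 \<le> n" "0 < cu" "0 < cd" "0 < cw" "cw < 1/2" "0 < \<epsilon>" "\<epsilon> < 1"
    and C2: "C2 = (1-cw)*(1-\<epsilon>)*cd/(cw*(1+cu)^2)"
    and N: "0 \<le> N" "N \<le> C2/(X0/n)" and l: "0 < l" "l \<le> \<epsilon>*(cw/(1-cw))/6"
  shows "-l*X0 - (-l*((1-cd)*X0)) + N*((l*(cw/(1-cw)) + 3*l^2)*(1+cu)^2*X0^2/n) \<le> -(cd*\<epsilon>*l/2) * n * (X0/n)"
proof -
  have n: "0 < n" using assms by simp
  define k where "k = cw/(1-cw)"
  have k: "0 < k" using assms by (simp add: k_def)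
  have D0: "0 \<le> (l*k + 3*l^2)*(1+cu)^2*X0^2/n" using assms n k by simp
  have "N*((l*k + 3*l^2)*(1+cu)^2*X0^2/n) \<le> (C2/(X0/n))*((l*k + 3*l^2)*(1+cu)^2*X0^2/n)"
    using N D0 by (intro mult_right_mono) auto
  also have "\<dots> = X0*(C2*(1+cu)^2*k)*(l + 3*l^2/k)"
    using n \<open>0 < X0\<close> k by (simp add: field_simps power2_eq_square)
  also have "C2*(1+cu)^2*k = (1-\<epsilon>)*cd" using assms by (simp add: C2 k_def field_simps)
  finally have ND: "N*((l*k + 3*l^2)*(1+cu)^2*X0^2/n) \<le> X0*((1-\<epsilon>)*cd)*(l + 3*l^2/k)" .
  have key: "(1-\<epsilon>)*(l + 3*l^2/k) \<le> l - \<epsilon>*l/2"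
  proof -
    have "l \<le> \<epsilon>*k/6" using l by (simp add: k_def)
    then have "3*l \<le> \<epsilon>/2*k" by simp
    then have "3*l/k \<le> \<epsilon>/2" using k by (simp add: pos_divide_le_eq)
    then have "l*(3*l/k) \<le> l*(\<epsilon>/2)" using l by (intro mult_left_mono) auto
    then have "3*l^2/k \<le> l*(\<epsilon>/2)" by (simp add: power2_eq_square)
    moreover have "0 \<le> 3*l^2/k" using k by simp
    moreover have "(1-\<epsilon>)*(l + 3*l^2/k) \<le> l + 3*l^2/k - \<epsilon>*l"
    proof -
      have "0 \<le> \<epsilon>*(3*l^2/k)" using \<open>0 < \<epsilon>\<close> \<open>0 \<le> 3*l^2/k\<close> by (rule mult_nonneg_nonneg[OF less_imp_le])
      moreover have "(1-\<epsilon>)*(l + 3*l^2/k) = l + 3*l^2/k - \<epsilon>*l - \<epsilon>*(3*l^2/k)" by (simp add: algebra_simps add_divide_distrib[symmetric])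
      ultimately show ?thesis by linarith
    qed
    moreover have "l*(\<epsilon>/2) = \<epsilon>*l/2" by simp
    ultimately show ?thesis by linarith
  qed
  have "X0*((1-\<epsilon>)*cd)*(l + 3*l^2/k) \<le> X0*cd*(l - \<epsilon>*l/2)"
  proof -
    have "X0*cd*((1-\<epsilon>)*(l + 3*l^2/k)) \<le> X0*cd*(l - \<epsilon>*l/2)" using key assms by (intro mult_left_mono) auto
    then show ?thesis by (simp add: algebra_simps)
  qed
  moreover have "X0*cd*(l - \<epsilon>*l/2) - X0*cd*l = -(cd*\<epsilon>*l/2) * n * (X0/n)" using n by (simp add: algebra_simps)
  moreover have "-l*X0 - (-l*((1-cd)*X0)) = -(X0*cd*l)" by (simp add: algebra_simps)
  moreover have "(l*(cw/(1-cw)) + 3*l^2) = (l*k + 3*l^2)" by (simp add: k_def)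
  ultimately show ?thesis using ND by (simp only:)
qed



lemma hit_enat: "hit A xs = enat t \<Longrightarrow> t < length xs \<and> A (xs!t) \<and> (\<forall>s<t. \<not> A (xs!s))"
proof -
  assume h: "hit A xs = enat t"
  then have ex: "\<exists>t<length xs. A (xs ! t)" by (auto simp: hit_def split: if_splits)
  then have t: "t = (LEAST t. t < length xs \<and> A (xs ! t))" using h by (auto simp: hit_def)
  have "t < length xs \<and> A (xs!t)" unfolding t using ex by (rule LeastI_ex)
  moreover have "\<forall>s<t. \<not> A (xs!s)"
  proof (intro allI impI)
    fix s assume "s < t"
    then have "\<not> (s < length xs \<and> A (xs ! s))" unfolding t by (rule not_less_Least)
    then show "\<not> A (xs!s)" using \<open>s < t\<close> calculation by auto
  qed
  ultimately show ?thesis by blast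
qed

lemma hit_le: "s < length xs \<Longrightarrow> A (xs!s) \<Longrightarrow> hit A xs \<le> enat s"
  unfolding hit_def by (auto intro: Least_le)

lemma hit_ev1: "hit A xs = enat t \<Longrightarrow> xs \<in> ev (\<lambda>_. True) A"
  using hit_enat[of A xs t] unfolding ev_def by blast

lemma hit_ev2:
  assumes "hit A xs = enat t" "enat t \<le> hit W xs" "enat t \<le> hit U xs"
  shows "xs \<in> ev (\<lambda>x. \<not> W x \<and> \<not> U x) A"
proof -
  have h: "t < length xs" "A (xs!t)" "\<forall>s<t. \<not> A (xs!s)" using hit_enat[OF assms(1)] by auto
  have "\<forall>s<t. \<not> W (xs!s) \<and> \<not> U (xs!s)"
  proof (intro allI impI conjI notI)
    fix s assume s: "s < t" and "W (xs!s)"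
    then have "hit W xs \<le> enat s" using h by (intro hit_le) auto
    then show False using assms(2) s by (metis enat_ord_simps(2) leD order_trans)
  next
    fix s assume s: "s < t" and "U (xs!s)"
    then have "hit U xs \<le> enat s" using h by (intro hit_le) auto
    then show False using assms(3) s by (metis enat_ord_simps(2) leD order_trans)
  qed
  then show ?thesis unfolding ev_def using h by blast
qed

lemma bound_gen:
  fixes \<mu> D Th :: real
  assumes "Inv n k x0" "0 \<le> D"
    and st: "\<And>x. Inv n k x \<Longrightarrow> G x \<Longrightarrow> \<not> A x \<Longrightarrow>
      (\<integral>\<^sup>+y. ennreal (exp (\<mu> * real (cnt n y i))) \<partial>step p n x) \<le> ennreal (exp (\<mu> * real (cnt n x i) + D))"
    and tg: "\<And>x. Inv n k x \<Longrightarrow> A x \<Longrightarrow> Th \<le> \<mu> * real (cnt n x i)"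
  shows "measure_pmf.prob (run p n x0 N) (ev G A) \<le> exp (\<mu> * real (cnt n x0 i) - Th + real N * D)"
proof -
  define F where "F = (\<lambda>t y. exp (\<mu> * real (cnt n y i) - real t * D))"
  have "measure_pmf.prob (run p n x0 N) (ev G A) \<le> F 0 x0 / exp (Th - real N * D)"
  proof (rule generic_prob[where Inv="Inv n k"])
    show "\<And>t x. 0 \<le> F t x" by (simp add: F_def)
    show "\<And>x y. Inv n k x \<Longrightarrow> y \<in> set_pmf (step p n x) \<Longrightarrow> Inv n k y" by (rule Inv_step)
    show "\<And>t x. Inv n k x \<Longrightarrow> G x \<Longrightarrow> \<not> A x \<Longrightarrow> t < N \<Longrightarrow>
        (\<integral>\<^sup>+y. ennreal (F (Suc t) y) \<partial>step p n x) \<le> ennreal (F t x)"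
      unfolding F_def by (rule super_wrap) (rule st)
    show "\<And>t x. Inv n k x \<Longrightarrow> A x \<Longrightarrow> t \<le> N \<Longrightarrow> exp (Th - real N * D) \<le> F t x"
    proof -
      fix t x assume "Inv n k x" "A x" "t \<le> N"
      then have "Th \<le> \<mu> * real (cnt n x i)" using tg by blast
      moreover have "real t * D \<le> real N * D" using \<open>t \<le> N\<close> assms(2) by (intro mult_right_mono) auto
      ultimately show "exp (Th - real N * D) \<le> F t x" by (simp add: F_def)
    qed
  qed (use assms in auto)
  also have "\<dots> = exp (\<mu> * real (cnt n x0 i) - Th + real N * D)"
    by (simp add: F_def exp_diff[symmetric] algebra_simps)
  finally show ?thesis .
qed



lemma nat_floor_le: "0 \<le> z \<Longrightarrow> real (nat \<lfloor>z\<rfloor>) \<le> z"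
  by (simp add: of_nat_nat)

lemma up_conv: "n > 0 \<Longrightarrow> ((1+cu)*(X0/real n) \<le> alpha n x i) \<longleftrightarrow> (1+cu)*X0 \<le> real (cnt n x i)"
  by (simp add: alpha_cnt divide_le_cancel field_simps)

lemma down_conv: "n > 0 \<Longrightarrow> (alpha n x i \<le> (1-cd)*(X0/real n)) \<longleftrightarrow> real (cnt n x i) \<le> (1-cd)*X0"
  by (simp add: alpha_cnt field_simps)

lemma exp_final: "(E::real) \<le> -c' * m \<Longrightarrow> c \<le> c' \<Longrightarrow> 0 \<le> m \<Longrightarrow> exp E \<le> exp (-c * m)"
proof -
  assume a: "E \<le> -c' * m" "c \<le> c'" "0 \<le> m"
  have "c * m \<le> c' * m" using a by (intro mult_right_mono) auto
  then have "E \<le> -c * m" using a by simp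
  then show ?thesis by simp
qed

theorem lemma4p5:
  fixes p :: protocol and cu cd cw \<epsilon> :: real
  assumes "cu > 0" and "cd > 0" and "0 < cw" and "cw < 1/2"
      and "0 < \<epsilon>" and "\<epsilon> < 1"
  shows "\<exists>c>0. \<forall>n k opn0 i.
     1 \<le> k \<and> k \<le> n \<and> (\<forall>v<n. opn0 v \<in> {1..k}) \<and> i \<in> {1..k} \<longrightarrow>
     (let a0 = alpha n opn0 i;
          P = exp (- c * real n * (if p = ThreeMajority then a0^2 else a0));
          C1 = (1 - \<epsilon>) * cu / (1 + cu)^2;
          C2 = (1 - cw) * (1 - \<epsilon>) * cd / (cw * (1 + cu)^2);
          up = (\<lambda>opn. alpha n opn i \<ge> (1 + cu) * a0);
          down = (\<lambda>opn. alpha n opn i \<le> (1 - cd) * a0);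
          weak = (\<lambda>opn. alpha n opn i \<le> (1 - cw) * gamma n k opn);
          N1 = nat \<lfloor>C1 / a0\<rfloor>;
          N2 = nat \<lfloor>C2 / a0\<rfloor>
      in measure_pmf.prob (run p n opn0 N1)
           {xs. \<exists>t::nat. hit up xs = enat t \<and> real t \<le> C1 / a0} \<le> P
       \<and> measure_pmf.prob (run p n opn0 N2)
           {xs. \<exists>t::nat. hit down xs = enat t \<and> enat t \<le> hit weak xs
                   \<and> enat t \<le> hit up xs \<and> real t \<le> C2 / a0} \<le> P)"
proof -
  note cs = assms
  define C1 where "C1 = (1 - \<epsilon>) * cu / (1 + cu)^2"
  define C2 where "C2 = (1 - cw) * (1 - \<epsilon>) * cd / (cw * (1 + cu)^2)"
  have C1p: "0 < C1" using cs by (simp add: C1_def)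
  have C2p: "0 < C2" using cs by (simp add: C2_def)
  define \<theta>1 where "\<theta>1 = min 1 (\<epsilon>*cu/(4*C1*(1+cu)))"
  define \<theta>2 where "\<theta>2 = min 1 (\<epsilon>*cd/(2*C2*(1+cu)))"
  define lam2 where "lam2 = min 1 (\<epsilon>*(cw/(1-cw))/6)"
  have th1: "0 < \<theta>1" "\<theta>1 \<le> 1" "\<theta>1 \<le> \<epsilon>*cu/(4*C1*(1+cu))" using cs C1p by (auto simp: \<theta>1_def)
  have th2: "0 < \<theta>2" "\<theta>2 \<le> 1" "\<theta>2 \<le> \<epsilon>*cd/(2*C2*(1+cu))" using cs C2p by (auto simp: \<theta>2_def)
  have la2: "0 < lam2" "lam2 \<le> 1" "lam2 \<le> \<epsilon>*(cw/(1-cw))/6" using cs by (auto simp: lam2_def)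
  define cU where "cU = (if p = ThreeMajority then \<theta>1*\<epsilon>*cu/2 else cu*\<epsilon>^2/4)"
  define cD where "cD = (if p = ThreeMajority then \<theta>2*\<epsilon>*cd/2 else cd*\<epsilon>*lam2/2)"
  define c where "c = min cU cD"
  have cpos: "0 < c" using cs th1 th2 la2 by (auto simp: c_def cU_def cD_def)
  show ?thesis
  proof (intro exI[of _ c] conjI allI impI cpos)
    fix n k :: nat and opn0 :: config and i :: nat
    assume H: "1 \<le> k \<and> k \<le> n \<and> (\<forall>v<n. opn0 v \<in> {1..k}) \<and> i \<in> {1..k}"
    have n: "n > 0" using H by simp
    have Inv0: "Inv n k opn0" using H by (simp add: Inv_def)
    define X0 where "X0 = real (cnt n opn0 i)"
    have X0b: "0 \<le> X0" "X0 \<le> real n" using cnt_le[of n opn0 i] by (auto simp: X0_def)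
    have a0: "alpha n opn0 i = X0 / real n" by (simp add: alpha_cnt X0_def)
    define m where "m = real n * (if p = ThreeMajority then (X0/real n)^2 else X0/real n)"
    have m0: "0 \<le> m" using X0b by (simp add: m_def)
    define up where "up = (\<lambda>opn. (1 + cu) * (X0/real n) \<le> alpha n opn i)"
    define down where "down = (\<lambda>opn. alpha n opn i \<le> (1 - cd) * (X0/real n))"
    define weak where "weak = (\<lambda>opn. alpha n opn i \<le> (1 - cw) * gamma n k opn)"
    define N1 where "N1 = nat \<lfloor>C1 / (X0/real n)\<rfloor>"
    define N2 where "N2 = nat \<lfloor>C2 / (X0/real n)\<rfloor>"
    define S1 where "S1 = {xs. \<exists>t::nat. hit up xs = enat t \<and> real t \<le> C1 / (X0/real n)}"
    define S2' where "S2' = {xs. \<exists>t::nat. hit down xs = enat t \<and> enat t \<le> hit weak xs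
                   \<and> enat t \<le> hit up xs \<and> real t \<le> C2 / (X0/real n)}"
    have goal: "measure_pmf.prob (run p n opn0 N1) S1 \<le> exp (- c * m) \<and>
                measure_pmf.prob (run p n opn0 N2) S2' \<le> exp (- c * m)"
    proof (cases "X0 = 0")
      case True
      then have "m = 0" by (simp add: m_def)
      then show ?thesis by (simp add: measure_pmf.prob_le_1)
    next
      case False
      then have X0p: "0 < X0" using X0b by simp
      have N1b: "0 \<le> real N1" "real N1 \<le> C1/(X0/real n)"
        unfolding N1_def using C1p X0p n by (auto intro!: nat_floor_le)
      have N2b: "0 \<le> real N2" "real N2 \<le> C2/(X0/real n)"
        unfolding N2_def using C2p X0p n by (auto intro!: nat_floor_le)
      have sub1: "S1 \<subseteq> ev (\<lambda>_. True) up" unfolding S1_def using hit_ev1 by blast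
      have sub2: "S2' \<subseteq> ev (\<lambda>x. \<not> weak x \<and> \<not> up x) down" unfolding S2'_def using hit_ev2 by blast
      have upc: "up x \<longleftrightarrow> (1+cu)*X0 \<le> real (cnt n x i)" for x using up_conv[OF n] by (simp add: up_def)
      have downc: "down x \<longleftrightarrow> real (cnt n x i) \<le> (1-cd)*X0" for x using down_conv[OF n] by (simp add: down_def)
      have U: "measure_pmf.prob (run p n opn0 N1) (ev (\<lambda>_. True) up) \<le> exp (- c * m)"
      proof (cases p)
        case ThreeMajority
        define l where "l = \<theta>1 * X0 / real n"
        have l: "0 \<le> l" "l \<le> 1"
        proof -
          have "X0*\<theta>1 \<le> X0*1" using th1 X0b by (intro mult_left_mono) auto
          then show "0 \<le> l" "l \<le> 1" using th1 X0b n by (auto simp: l_def field_simps)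
        qed
        have "measure_pmf.prob (run p n opn0 N1) (ev (\<lambda>_. True) up) \<le>
            exp (l * real (cnt n opn0 i) - l*((1+cu)*X0) + real N1 * (l*(1+cu)^2*X0^2/n + 2*l^2*(1+cu)*X0))"
        proof (rule bound_gen[OF Inv0])
          show "0 \<le> l*(1+cu)^2*X0^2/n + 2*l^2*(1+cu)*X0" using l cs X0b by simp
          fix x assume "Inv n k x" "\<not> up x"
          then have "real (cnt n x i) \<le> (1+cu)*X0" using upc by auto
          then show "(\<integral>\<^sup>+y. ennreal (exp (l * real (cnt n y i))) \<partial>step p n x) \<le>
              ennreal (exp (l * real (cnt n x i) + (l*(1+cu)^2*X0^2/n + 2*l^2*(1+cu)*X0)))"
            unfolding ThreeMajority using step3U[OF n l] by simp
        next
          fix x assume "Inv n k x" "up x"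
          then show "l*((1+cu)*X0) \<le> l * real (cnt n x i)" using upc l by (simp add: mult_left_mono)
        qed
        also have "\<dots> \<le> exp (- c * m)"
        proof (rule exp_final[OF _ _ m0])
          show "l * real (cnt n opn0 i) - l*((1+cu)*X0) + real N1 * (l*(1+cu)^2*X0^2/n + 2*l^2*(1+cu)*X0) \<le> -(\<theta>1*\<epsilon>*cu/2) * m"
            using arith3U[of X0 "real n" cu \<epsilon> C1 \<theta>1 "real N1" l] X0p X0b cs C1_def th1 N1b l_def
            by (simp add: m_def ThreeMajority mult.assoc X0_def[symmetric])
          show "c \<le> \<theta>1*\<epsilon>*cu/2" by (simp add: c_def cU_def ThreeMajority)
        qed
        finally show ?thesis .
      next
        case TwoChoices
        define l where "l = \<epsilon>/2"
        have l: "0 \<le> l" "l \<le> 1" using cs by (auto simp: l_def)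
        have "measure_pmf.prob (run p n opn0 N1) (ev (\<lambda>_. True) up) \<le>
            exp (l * real (cnt n opn0 i) - l*((1+cu)*X0) + real N1 * ((l + l^2)*(1+cu)^2*X0^2/n))"
        proof (rule bound_gen[OF Inv0])
          show "0 \<le> (l + l^2)*(1+cu)^2*X0^2/n" using l cs X0b by simp
          fix x assume "Inv n k x" "\<not> up x"
          then have "real (cnt n x i) \<le> (1+cu)*X0" using upc by auto
          then show "(\<integral>\<^sup>+y. ennreal (exp (l * real (cnt n y i))) \<partial>step p n x) \<le>
              ennreal (exp (l * real (cnt n x i) + (l + l^2)*(1+cu)^2*X0^2/n))"
            unfolding TwoChoices using step2U[OF n l] by simp
        next
          fix x assume "Inv n k x" "up x"
          then show "l*((1+cu)*X0) \<le> l * real (cnt n x i)" using upc l by (simp add: mult_left_mono)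
        qed
        also have "\<dots> \<le> exp (- c * m)"
        proof (rule exp_final[OF _ _ m0])
          show "l * real (cnt n opn0 i) - l*((1+cu)*X0) + real N1 * ((l + l^2)*(1+cu)^2*X0^2/n) \<le> -(cu*\<epsilon>^2/4) * m"
            using arith2U[OF X0p X0b(2) cs(1) cs(5) cs(6) C1_def N1b l_def] n
            by (simp add: m_def TwoChoices X0_def[symmetric] mult.assoc)
          show "c \<le> cu*\<epsilon>^2/4" by (simp add: c_def cU_def TwoChoices)
        qed
        finally show ?thesis .
      qed
      have D: "measure_pmf.prob (run p n opn0 N2) (ev (\<lambda>x. \<not> weak x \<and> \<not> up x) down) \<le> exp (- c * m)"
      proof (cases p)
        case ThreeMajority
        define l where "l = \<theta>2 * X0 / real n"
        have l: "0 \<le> l" "l \<le> 1"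
        proof -
          have "X0*\<theta>2 \<le> X0*1" using th2 X0b by (intro mult_left_mono) auto
          then show "0 \<le> l" "l \<le> 1" using th2 X0b n by (auto simp: l_def field_simps)
        qed
        have "measure_pmf.prob (run p n opn0 N2) (ev (\<lambda>x. \<not> weak x \<and> \<not> up x) down) \<le>
            exp ((-l) * real (cnt n opn0 i) - (-l*((1-cd)*X0)) + real N2 * (l^2*(1+cu)*X0 + l*(cw/(1-cw))*(1+cu)^2*X0^2/n))"
        proof (rule bound_gen[OF Inv0])
          show "0 \<le> l^2*(1+cu)*X0 + l*(cw/(1-cw))*(1+cu)^2*X0^2/n" using l cs X0b by simp
          fix x assume x: "Inv n k x" "\<not> weak x \<and> \<not> up x"
          then have "real (cnt n x i) \<le> (1+cu)*X0" using upc by auto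
          then show "(\<integral>\<^sup>+y. ennreal (exp ((-l) * real (cnt n y i))) \<partial>step p n x) \<le>
              ennreal (exp ((-l) * real (cnt n x i) + (l^2*(1+cu)*X0 + l*(cw/(1-cw))*(1+cu)^2*X0^2/n)))"
            unfolding ThreeMajority using step3D[OF n l(1) _ cs(3,4) x(1)] x(2) by (simp add: weak_def)
        next
          fix x assume "Inv n k x" "down x"
          then show "-l*((1-cd)*X0) \<le> (-l) * real (cnt n x i)" using downc l by (simp add: mult_left_mono)
        qed
        also have "\<dots> \<le> exp (- c * m)"
        proof (rule exp_final[OF _ _ m0])
          show "(-l) * real (cnt n opn0 i) - (-l*((1-cd)*X0)) + real N2 * (l^2*(1+cu)*X0 + l*(cw/(1-cw))*(1+cu)^2*X0^2/n) \<le> -(\<theta>2*\<epsilon>*cd/2) * m"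
            using arith3D[of X0 "real n" cu cd cw \<epsilon> C2 \<theta>2 "real N2" l] X0p X0b cs C2_def th2 N2b l_def
            by (simp add: m_def ThreeMajority mult.assoc X0_def[symmetric])
          show "c \<le> \<theta>2*\<epsilon>*cd/2" by (simp add: c_def cD_def ThreeMajority)
        qed
        finally show ?thesis .
      next
        case TwoChoices
        define l where "l = lam2"
        have l: "0 \<le> l" "l \<le> 1" using la2 by (auto simp: l_def)
        have "measure_pmf.prob (run p n opn0 N2) (ev (\<lambda>x. \<not> weak x \<and> \<not> up x) down) \<le>
            exp ((-l) * real (cnt n opn0 i) - (-l*((1-cd)*X0)) + real N2 * ((l*(cw/(1-cw)) + 3*l^2)*(1+cu)^2*X0^2/n))"
        proof (rule bound_gen[OF Inv0])
          show "0 \<le> (l*(cw/(1-cw)) + 3*l^2)*(1+cu)^2*X0^2/n" using l cs X0b by simp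
          fix x assume x: "Inv n k x" "\<not> weak x \<and> \<not> up x"
          then have "real (cnt n x i) \<le> (1+cu)*X0" using upc by auto
          then show "(\<integral>\<^sup>+y. ennreal (exp ((-l) * real (cnt n y i))) \<partial>step p n x) \<le>
              ennreal (exp ((-l) * real (cnt n x i) + (l*(cw/(1-cw)) + 3*l^2)*(1+cu)^2*X0^2/n))"
            unfolding TwoChoices using step2D[OF n l _ cs(3,4) x(1)] x(2) by (simp add: weak_def)
        next
          fix x assume "Inv n k x" "down x"
          then show "-l*((1-cd)*X0) \<le> (-l) * real (cnt n x i)" using downc l by (simp add: mult_left_mono)
        qed
        also have "\<dots> \<le> exp (- c * m)"
        proof (rule exp_final[OF _ _ m0])
          show "(-l) * real (cnt n opn0 i) - (-l*((1-cd)*X0)) + real N2 * ((l*(cw/(1-cw)) + 3*l^2)*(1+cu)^2*X0^2/n) \<le> -(cd*\<epsilon>*l/2) * m"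
            using arith2D[of X0 "real n" cu cd cw \<epsilon> C2 "real N2" l] X0p X0b cs C2_def la2 N2b l_def
            by (simp add: m_def TwoChoices X0_def[symmetric])
          show "c \<le> cd*\<epsilon>*l/2" by (simp add: c_def cD_def TwoChoices l_def)
        qed
        finally show ?thesis .
      qed
      have "measure_pmf.prob (run p n opn0 N1) S1 \<le> measure_pmf.prob (run p n opn0 N1) (ev (\<lambda>_. True) up)"
        using sub1 by (intro measure_pmf.finite_measure_mono) auto
      moreover have "measure_pmf.prob (run p n opn0 N2) S2' \<le> measure_pmf.prob (run p n opn0 N2) (ev (\<lambda>x. \<not> weak x \<and> \<not> up x) down)"
        using sub2 by (intro measure_pmf.finite_measure_mono) auto
      ultimately show ?thesis using U D by linarith
    qed
    show "let a0 = alpha n opn0 i;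
          P = exp (- c * real n * (if p = ThreeMajority then a0^2 else a0));
          C1 = (1 - \<epsilon>) * cu / (1 + cu)^2;
          C2 = (1 - cw) * (1 - \<epsilon>) * cd / (cw * (1 + cu)^2);
          up = (\<lambda>opn. alpha n opn i \<ge> (1 + cu) * a0);
          down = (\<lambda>opn. alpha n opn i \<le> (1 - cd) * a0);
          weak = (\<lambda>opn. alpha n opn i \<le> (1 - cw) * gamma n k opn);
          N1 = nat \<lfloor>C1 / a0\<rfloor>;
          N2 = nat \<lfloor>C2 / a0\<rfloor>
      in measure_pmf.prob (run p n opn0 N1)
           {xs. \<exists>t::nat. hit up xs = enat t \<and> real t \<le> C1 / a0} \<le> P
       \<and> measure_pmf.prob (run p n opn0 N2)
           {xs. \<exists>t::nat. hit down xs = enat t \<and> enat t \<le> hit weak xs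
                   \<and> enat t \<le> hit up xs \<and> real t \<le> C2 / a0} \<le> P"
      unfolding Let_def a0 C1_def[symmetric] C2_def[symmetric]
      using goal unfolding S1_def S2'_def N1_def N2_def up_def down_def weak_def m_def
      by (simp add: mult.assoc)
  qed
qed

end
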